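(* Let $\varphi:M\to M'$ be a homomorphism of abelian groups such that $\mathrm{Ker}\,\varphi$ is finite and $(\mathrm{Coker}\,\varphi)_{\mathrm{div}}=0$. If $M_{\mathrm{div}}$ or $M'_{\mathrm{div}}$ is uniquely divisible, then $\varphi$ induces an isomorphism $M_{\mathrm{div}}\xrightarrow{\cong}M'_{\mathrm{div}}$.
   Context: For an abelian group $A$, $A_{\mathrm{div}}$ denotes its maximal divisible subgroup. *)

theory Defs
  imports "HOL-Algebra.Algebra"
begin

text \<open>Abelian groups are HOL-Algebra commutative groups (written multiplicatively).
A subset H is divisible if every element of H has an n-th root in H for every n >= 1.\<close>

definition divisible_subset :: "('a, 'm) monoid_scheme \<Rightarrow> 'a set \<Rightarrow> bool" where
  "divisible_subset G H \<longleftrightarrow>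
     (\<forall>x\<in>H. \<forall>n::nat. n \<ge> 1 \<longrightarrow> (\<exists>y\<in>H. y [^]\<^bsub>G\<^esub> n = x))"

definition uniquely_divisible_subset :: "('a, 'm) monoid_scheme \<Rightarrow> 'a set \<Rightarrow> bool" where
  "uniquely_divisible_subset G H \<longleftrightarrow>
     (\<forall>x\<in>H. \<forall>n::nat. n \<ge> 1 \<longrightarrow> (\<exists>!y. y \<in> H \<and> y [^]\<^bsub>G\<^esub> n = x))"

definition div_part :: "('a, 'm) monoid_scheme \<Rightarrow> 'a set" where
  "div_part G = \<Union>{H. subgroup H G \<and> divisible_subset G H}"

definition coker :: "('a, 'm) monoid_scheme \<Rightarrow> ('b, 'n) monoid_scheme \<Rightarrow> ('a \<Rightarrow> 'b) \<Rightarrow> 'b set monoid" where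
  "coker G H f = H Mod (f ` carrier G)"

end

theory Submission
  imports Defs
begin

lemma (in comm_group) prod_subgroup:
  assumes "subgroup H1 G" "subgroup H2 G"
  shows "subgroup {a \<otimes> b | a b. a \<in> H1 \<and> b \<in> H2} G"
proof -
  interpret A: subgroup H1 G by fact
  interpret B: subgroup H2 G by fact
  show ?thesis
  proof
    show "{a \<otimes> b | a b. a \<in> H1 \<and> b \<in> H2} \<subseteq> carrier G" by auto
  next
    fix x y assume "x \<in> {a \<otimes> b | a b. a \<in> H1 \<and> b \<in> H2}" "y \<in> {a \<otimes> b | a b. a \<in> H1 \<and> b \<in> H2}"
    then obtain a b c d where "a \<in> H1" "b \<in> H2" "c \<in> H1" "d \<in> H2" "x = a \<otimes> b" "y = c \<otimes> d" by blast
    moreover have "(a \<otimes> b) \<otimes> (c \<otimes> d) = (a \<otimes> c) \<otimes> (b \<otimes> d)"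
      using calculation by (simp add: m_ac)
    ultimately show "x \<otimes> y \<in> {a \<otimes> b | a b. a \<in> H1 \<and> b \<in> H2}" by blast
  next
    show "\<one> \<in> {a \<otimes> b | a b. a \<in> H1 \<and> b \<in> H2}"
      by (rule CollectI, rule exI[of _ \<one>], rule exI[of _ \<one>]) auto
  next
    fix x assume "x \<in> {a \<otimes> b | a b. a \<in> H1 \<and> b \<in> H2}"
    then obtain a b where "a \<in> H1" "b \<in> H2" "x = a \<otimes> b" by blast
    moreover have "inv (a \<otimes> b) = inv a \<otimes> inv b"
      using calculation by (simp add: inv_mult)
    ultimately show "inv x \<in> {a \<otimes> b | a b. a \<in> H1 \<and> b \<in> H2}" by force
  qed
qed

lemma (in comm_group) prod_divisible:
  assumes "subgroup H1 G" "subgroup H2 G" "divisible_subset G H1" "divisible_subset G H2"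
  shows "divisible_subset G {a \<otimes> b | a b. a \<in> H1 \<and> b \<in> H2}"
  unfolding divisible_subset_def
proof (intro ballI allI impI)
  interpret A: subgroup H1 G by fact
  interpret B: subgroup H2 G by fact
  fix x and n :: nat assume "x \<in> {a \<otimes> b | a b. a \<in> H1 \<and> b \<in> H2}" "1 \<le> n"
  then obtain a b where ab: "a \<in> H1" "b \<in> H2" "x = a \<otimes> b" by blast
  obtain u where u: "u \<in> H1" "u [^] n = a" using assms(3) ab `1 \<le> n` unfolding divisible_subset_def by blast
  obtain v where v: "v \<in> H2" "v [^] n = b" using assms(4) ab `1 \<le> n` unfolding divisible_subset_def by blast
  have "(u \<otimes> v) [^] n = x"
    using u v ab by (simp add: pow_mult_distrib m_comm)
  then show "\<exists>y\<in>{a \<otimes> b | a b. a \<in> H1 \<and> b \<in> H2}. y [^] n = x" using u v by blast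
qed

lemma div_part_max: "subgroup H G \<Longrightarrow> divisible_subset G H \<Longrightarrow> H \<subseteq> div_part G"
  unfolding div_part_def by blast

lemma (in comm_group) div_part_divisible: "divisible_subset G (div_part G)"
  unfolding divisible_subset_def
proof (intro ballI allI impI)
  fix x and n :: nat assume "x \<in> div_part G" "1 \<le> n"
  then obtain H where H: "subgroup H G" "divisible_subset G H" "x \<in> H" unfolding div_part_def by blast
  then obtain y where "y \<in> H" "y [^] n = x" using `1 \<le> n` unfolding divisible_subset_def by blast
  moreover have "H \<subseteq> div_part G" using H div_part_max by blast
  ultimately show "\<exists>y\<in>div_part G. y [^] n = x" by blast
qed

lemma (in comm_group) div_part_subgroup: "subgroup (div_part G) G"
proof
  show "div_part G \<subseteq> carrier G" unfolding div_part_def using subgroup.subset by blast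
next
  fix x y assume x: "x \<in> div_part G" and y: "y \<in> div_part G"
  then obtain H1 H2 where h: "subgroup H1 G" "divisible_subset G H1" "x \<in> H1"
     "subgroup H2 G" "divisible_subset G H2" "y \<in> H2" unfolding div_part_def by blast
  have "x \<otimes> y \<in> {a \<otimes> b | a b. a \<in> H1 \<and> b \<in> H2}" using h by blast
  moreover have "{a \<otimes> b | a b. a \<in> H1 \<and> b \<in> H2} \<subseteq> div_part G"
    using div_part_max prod_subgroup prod_divisible h by blast
  ultimately show "x \<otimes> y \<in> div_part G" by blast
next
  have "subgroup {\<one>} G" by (rule triv_subgroup)
  moreover have "divisible_subset G {\<one>}" unfolding divisible_subset_def by auto
  ultimately show "\<one> \<in> div_part G" using div_part_max by blast
next
  fix x assume "x \<in> div_part G"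
  then obtain H where "subgroup H G" "divisible_subset G H" "x \<in> H" unfolding div_part_def by blast
  then show "inv x \<in> div_part G" unfolding div_part_def by (blast intro: subgroup.m_inv_closed)
qed

lemma (in group_hom) img_divisible:
  assumes "subgroup S G" "divisible_subset G S"
  shows "divisible_subset H (h ` S)"
  unfolding divisible_subset_def
proof (intro ballI allI impI)
  fix x and n :: nat assume "x \<in> h ` S" "1 \<le> n"
  then obtain s where s: "s \<in> S" "x = h s" by blast
  then obtain t where t: "t \<in> S" "t [^] n = s" using assms(2) `1 \<le> n` unfolding divisible_subset_def by blast
  have "t \<in> carrier G" using t assms(1) subgroup.subset by blast
  then have "h t [^]\<^bsub>H\<^esub> n = x" using t s by (metis hom_nat_pow)
  then show "\<exists>y\<in>h ` S. y [^]\<^bsub>H\<^esub> n = x" using t by blast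
qed

theorem lemma2p7:
  fixes M :: "('a, 'm) monoid_scheme" and M' :: "('b, 'n) monoid_scheme" and \<phi> :: "'a \<Rightarrow> 'b"
  assumes "comm_group M" and "comm_group M'"
    and "\<phi> \<in> hom M M'"
    and "finite (kernel M M' \<phi>)"
    and "div_part (coker M M' \<phi>) = {\<one>\<^bsub>coker M M' \<phi>\<^esub>}"
    and "uniquely_divisible_subset M (div_part M) \<or> uniquely_divisible_subset M' (div_part M')"
  shows "\<phi> \<in> iso (subgroup_generated M (div_part M)) (subgroup_generated M' (div_part M'))"
proof -
  interpret M: comm_group M by fact
  interpret M': comm_group M' by fact
  interpret f: group_hom M M' \<phi> using assms(3) by (simp add: group_hom_def group_hom_axioms_def M.group_axioms M'.group_axioms)
  define D where "D = div_part M"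
  define D' where "D' = div_part M'"
  define K where "K = kernel M M' \<phi>"
  define I where "I = \<phi> ` carrier M"
  define N where "N = card K"
  have sD: "subgroup D M" unfolding D_def by (rule M.div_part_subgroup)
  have sD': "subgroup D' M'" unfolding D'_def by (rule M'.div_part_subgroup)
  have dD: "divisible_subset M D" unfolding D_def by (rule M.div_part_divisible)
  have dD': "divisible_subset M' D'" unfolding D'_def by (rule M'.div_part_divisible)
  have DM: "D \<subseteq> carrier M" using sD subgroup.subset by blast
  have DM': "D' \<subseteq> carrier M'" using sD' subgroup.subset by blast
  have img: "\<phi> ` D \<subseteq> D'"
    unfolding D'_def using f.subgroup_img_is_subgroup[OF sD] f.img_divisible[OF sD dD] div_part_max by blast
  have sI: "subgroup I M'" unfolding I_def using f.subgroup_img_is_subgroup[OF M.subgroup_self] .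
  interpret nI: normal I M' using M'.subgroup_imp_normal[OF sI] .
  have gq: "group (M' Mod I)" by (rule nI.factorgroup_is_group)
  interpret q: group_hom M' "M' Mod I" "\<lambda>a. I #>\<^bsub>M'\<^esub> a"
    using nI.r_coset_hom_Mod gq by (simp add: group_hom_def group_hom_axioms_def M'.group_axioms)
  have "(\<lambda>a. I #>\<^bsub>M'\<^esub> a) ` D' \<subseteq> div_part (M' Mod I)"
    using q.subgroup_img_is_subgroup[OF sD'] q.img_divisible[OF sD' dD'] div_part_max by blast
  also have "\<dots> = {I}" using assms(5) unfolding coker_def I_def by simp
  finally have DI: "D' \<subseteq> I"
  proof -
    assume h: "(\<lambda>a. I #>\<^bsub>M'\<^esub> a) ` D' \<subseteq> {I}"
    show "D' \<subseteq> I"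
    proof
      fix y assume "y \<in> D'"
      then have "I #>\<^bsub>M'\<^esub> y = I" "y \<in> carrier M'" using h DM' by auto
      then show "y \<in> I" using M'.rcos_self[OF _ sI] by metis
    qed
  qed
  have sK: "subgroup K M" unfolding K_def by (rule f.subgroup_kernel)
  have fK: "finite K" using assms(4) K_def by simp
  have N1: "N \<ge> 1" unfolding N_def using fK subgroup.one_closed[OF sK] by (metis One_nat_def Suc_leI card_gt_0_iff empty_iff)
  have KN: "k [^]\<^bsub>M\<^esub> N = \<one>\<^bsub>M\<^esub>" if "k \<in> K" for k
  proof -
    interpret cK: comm_group "subgroup_generated M K" using M.abelian_subgroup_generated[OF assms(1)] .
    have cK: "carrier (subgroup_generated M K) = K" using sK by (rule subgroup.carrier_subgroup_generated_subgroup)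
    have "k [^]\<^bsub>subgroup_generated M K\<^esub> N = \<one>\<^bsub>subgroup_generated M K\<^esub>"
      using cK.power_order_eq_one[of k] cK fK that unfolding N_def by simp
    moreover have "k [^]\<^bsub>subgroup_generated M K\<^esub> N = k [^]\<^bsub>M\<^esub> N"
      unfolding subgroup_generated_def using M.nat_pow_consistent by simp
    ultimately show ?thesis by simp
  qed
  have Kc: "K \<subseteq> carrier M" using sK subgroup.subset by blast
  define S where "S = {w [^]\<^bsub>M\<^esub> N | w. w \<in> carrier M \<and> \<phi> w \<in> D'}"
  have sS: "subgroup S M"
  proof
    show "S \<subseteq> carrier M" unfolding S_def by auto
  next
    fix x y assume "x \<in> S" "y \<in> S"
    then obtain w v where wv: "w \<in> carrier M" "\<phi> w \<in> D'" "v \<in> carrier M" "\<phi> v \<in> D'"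
      "x = w [^]\<^bsub>M\<^esub> N" "y = v [^]\<^bsub>M\<^esub> N" unfolding S_def by blast
    have "x \<otimes>\<^bsub>M\<^esub> y = (w \<otimes>\<^bsub>M\<^esub> v) [^]\<^bsub>M\<^esub> N" using wv by (simp add: M.pow_mult_distrib M.m_comm)
    moreover have "\<phi> (w \<otimes>\<^bsub>M\<^esub> v) \<in> D'" using wv sD' by (simp add: subgroup.m_closed)
    ultimately show "x \<otimes>\<^bsub>M\<^esub> y \<in> S" unfolding S_def using wv by blast
  next
    have "\<one>\<^bsub>M\<^esub> = \<one>\<^bsub>M\<^esub> [^]\<^bsub>M\<^esub> N" by simp
    moreover have "\<phi> \<one>\<^bsub>M\<^esub> \<in> D'" using sD' subgroup.one_closed by fastforce
    ultimately show "\<one>\<^bsub>M\<^esub> \<in> S" unfolding S_def by blast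
  next
    fix x assume "x \<in> S"
    then obtain w where w: "w \<in> carrier M" "\<phi> w \<in> D'" "x = w [^]\<^bsub>M\<^esub> N" unfolding S_def by blast
    have "inv\<^bsub>M\<^esub> x = (inv\<^bsub>M\<^esub> w) [^]\<^bsub>M\<^esub> N" using w by (simp add: M.nat_pow_inv)
    moreover have "\<phi> (inv\<^bsub>M\<^esub> w) \<in> D'" using w sD' by (simp add: subgroup.m_inv_closed)
    ultimately show "inv\<^bsub>M\<^esub> x \<in> S" unfolding S_def using w by blast
  qed
  have dS: "divisible_subset M S"
    unfolding divisible_subset_def
  proof (intro ballI allI impI)
    fix x and n :: nat assume "x \<in> S" "1 \<le> n"
    then obtain w where w: "w \<in> carrier M" "\<phi> w \<in> D'" "x = w [^]\<^bsub>M\<^esub> N" unfolding S_def by blast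
    obtain z where z: "z \<in> D'" "z [^]\<^bsub>M'\<^esub> n = \<phi> w" using dD' w `1 \<le> n` unfolding divisible_subset_def by blast
    obtain u where u: "u \<in> carrier M" "\<phi> u = z" using z DI unfolding I_def by blast
    define k where "k = u [^]\<^bsub>M\<^esub> n \<otimes>\<^bsub>M\<^esub> inv\<^bsub>M\<^esub> w"
    have kc: "k \<in> carrier M" unfolding k_def using u w by simp
    have "\<phi> k = \<one>\<^bsub>M'\<^esub>" unfolding k_def using u w z by (simp add: f.hom_nat_pow)
    then have "k \<in> K" unfolding K_def kernel_def using kc by simp
    then have kN: "k [^]\<^bsub>M\<^esub> N = \<one>\<^bsub>M\<^esub>" by (rule KN)
    have un: "u [^]\<^bsub>M\<^esub> n = k \<otimes>\<^bsub>M\<^esub> w" unfolding k_def using u w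
      by (simp add: M.m_assoc)
    have "(u [^]\<^bsub>M\<^esub> N) [^]\<^bsub>M\<^esub> n = (u [^]\<^bsub>M\<^esub> n) [^]\<^bsub>M\<^esub> N"
      using u by (simp add: M.nat_pow_pow mult.commute)
    also have "\<dots> = x" using un kN w kc by (simp add: M.pow_mult_distrib M.m_comm)
    finally show "\<exists>y\<in>S. y [^]\<^bsub>M\<^esub> n = x" unfolding S_def using u z by blast
  qed
  have SD: "S \<subseteq> D" unfolding D_def using sS dS div_part_max by blast
  have surj: "D' \<subseteq> \<phi> ` D"
  proof
    fix y assume "y \<in> D'"
    then obtain z where z: "z \<in> D'" "z [^]\<^bsub>M'\<^esub> N = y" using dD' N1 unfolding divisible_subset_def by blast
    obtain w where w: "w \<in> carrier M" "\<phi> w = z" using z DI unfolding I_def by blast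
    have "w [^]\<^bsub>M\<^esub> N \<in> D" using SD w z unfolding S_def by blast
    moreover have "\<phi> (w [^]\<^bsub>M\<^esub> N) = y" using w z by (simp add: f.hom_nat_pow)
    ultimately show "y \<in> \<phi> ` D" by blast
  qed
  have triv: "d = \<one>\<^bsub>M\<^esub>" if d: "d \<in> D" "d \<in> K" for d
    using assms(6) unfolding D_def[symmetric] D'_def[symmetric]
  proof
    assume u: "uniquely_divisible_subset M D"
    have "d [^]\<^bsub>M\<^esub> N = \<one>\<^bsub>M\<^esub>" using KN d by blast
    moreover have "\<one>\<^bsub>M\<^esub> \<in> D" using sD subgroup.one_closed by blast
    moreover have "\<one>\<^bsub>M\<^esub> [^]\<^bsub>M\<^esub> N = \<one>\<^bsub>M\<^esub>" by simp
    ultimately show ?thesis using u N1 d unfolding uniquely_divisible_subset_def by metis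
  next
    assume u: "uniquely_divisible_subset M' D'"
    obtain y where y: "y \<in> D" "y [^]\<^bsub>M\<^esub> N = d" using dD d N1 unfolding divisible_subset_def by blast
    have yc: "y \<in> carrier M" using y DM by blast
    have "\<phi> y \<in> D'" using img y by blast
    moreover have "\<phi> y [^]\<^bsub>M'\<^esub> N = \<one>\<^bsub>M'\<^esub>" using y d yc unfolding K_def kernel_def by (simp add: f.hom_nat_pow[symmetric])
    moreover have "\<one>\<^bsub>M'\<^esub> \<in> D'" using sD' subgroup.one_closed by blast
    moreover have "\<one>\<^bsub>M'\<^esub> [^]\<^bsub>M'\<^esub> N = \<one>\<^bsub>M'\<^esub>" by simp
    ultimately have "\<phi> y = \<one>\<^bsub>M'\<^esub>" using u N1 unfolding uniquely_divisible_subset_def by metis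
    then have "y \<in> K" unfolding K_def kernel_def using yc by simp
    then show ?thesis using KN y by metis
  qed
  have inj: "inj_on \<phi> D"
  proof (rule inj_onI)
    fix x x' assume xx: "x \<in> D" "x' \<in> D" "\<phi> x = \<phi> x'"
    have c: "x \<in> carrier M" "x' \<in> carrier M" using xx DM by auto
    define d where "d = x \<otimes>\<^bsub>M\<^esub> inv\<^bsub>M\<^esub> x'"
    have "d \<in> D" unfolding d_def using xx sD by (simp add: subgroup.m_closed subgroup.m_inv_closed)
    moreover have "d \<in> K" unfolding d_def K_def kernel_def using c xx by simp
    ultimately have "d = \<one>\<^bsub>M\<^esub>" using triv by blast
    then show "x = x'" unfolding d_def using c by (metis M.inv_equality M.inv_inv M.inv_closed)
  qed
  have cD: "carrier (subgroup_generated M D) = D" using sD by (rule subgroup.carrier_subgroup_generated_subgroup)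
  have cD': "carrier (subgroup_generated M' D') = D'" using sD' by (rule subgroup.carrier_subgroup_generated_subgroup)
  show ?thesis
    unfolding D_def[symmetric] D'_def[symmetric] iso_def hom_def bij_betw_def
    using cD cD' img surj inj DM f.hom_mult by (auto simp: Pi_def subset_iff)
qed

end
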